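(* Let $\alpha$ be a graph function on a strongly connected digraph $G$. There is a real number $b>-\infty$ such that no finite sequence of balancing operations applied starting from $\alpha$ can produce a graph function having an edge of weight less than $b$.
   Context: $G$ is a strongly connected directed graph (self-loops allowed); a graph function assigns a real weight $\alpha_{uv}$ to each edge. $\alpha_v^{\text{in}}=\max_{u:(u,v)\in G}\alpha_{uv}$, $\alpha_v^{\text{out}}=\max_{w:(v,w)\in G}\alpha_{vw}$. The balancing operation at a vertex $v$ adds $(\alpha_v^{\text{out}}-\alpha_v^{\text{in}})/2$ to each edge weight $\alpha_{uv}$ with $u\ne v$, subtracts the same amount from each $\alpha_{vw}$ with $w\ne v$, and leaves a self-loop at $v$ unchanged. *)

theory Defs
  imports Complex_Main
begin

definition strongly_connected :: "'v set \<Rightarrow> ('v \<times> 'v) set \<Rightarrow> bool" where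
  "strongly_connected V E \<longleftrightarrow> finite V \<and> V \<noteq> {} \<and> E \<subseteq> V \<times> V \<and>
     (\<forall>u\<in>V. \<forall>v\<in>V. (u, v) \<in> E\<^sup>+)"

text \<open>A graph function: a real weight for each edge (values off E are irrelevant).\<close>
type_synonym 'v graph_fun = "'v \<Rightarrow> 'v \<Rightarrow> real"

definition alpha_in :: "('v \<times> 'v) set \<Rightarrow> 'v graph_fun \<Rightarrow> 'v \<Rightarrow> real" where
  "alpha_in E \<alpha> v = Max {\<alpha> u v | u. (u, v) \<in> E}"

definition alpha_out :: "('v \<times> 'v) set \<Rightarrow> 'v graph_fun \<Rightarrow> 'v \<Rightarrow> real" where
  "alpha_out E \<alpha> v = Max {\<alpha> v w | w. (v, w) \<in> E}"

definition balance :: "('v \<times> 'v) set \<Rightarrow> 'v graph_fun \<Rightarrow> 'v \<Rightarrow> 'v graph_fun" where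
  "balance E \<alpha> v = (let d = (alpha_out E \<alpha> v - alpha_in E \<alpha> v) / 2 in
     (\<lambda>x y. if (x, y) \<in> E \<and> y = v \<and> x \<noteq> v then \<alpha> x y + d
            else if (x, y) \<in> E \<and> x = v \<and> y \<noteq> v then \<alpha> x y - d
            else \<alpha> x y))"

definition balance_seq :: "('v \<times> 'v) set \<Rightarrow> 'v graph_fun \<Rightarrow> 'v list \<Rightarrow> 'v graph_fun" where
  "balance_seq E \<alpha> vs = foldl (balance E) \<alpha> vs"

end

theory Submission
  imports Defs
begin

lemma pot:
  assumes "\<forall>x y. (x,y)\<in>E \<longrightarrow> \<beta> x y = \<alpha> x y + \<phi> y - \<phi> x"
  shows "\<exists>\<psi>. \<forall>x y. (x,y)\<in>E \<longrightarrow> balance E \<beta> v x y = \<alpha> x y + \<psi> y - \<psi> x"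
proof -
  define d where "d = (alpha_out E \<beta> v - alpha_in E \<beta> v) / 2"
  show ?thesis
    apply (rule exI[of _ "\<phi>(v := \<phi> v + d)"])
    using assms by (auto simp: balance_def d_def[symmetric] Let_def)
qed

lemma pot_seq:
  "\<exists>\<phi>. \<forall>x y. (x,y)\<in>E \<longrightarrow> balance_seq E \<alpha> vs x y = \<alpha> x y + \<phi> y - \<phi> x"
proof (induction vs rule: rev_induct)
  case Nil
  show ?case by (rule exI[of _ "\<lambda>_. 0"]) (simp add: balance_seq_def)
next
  case (snoc v vs)
  then obtain \<phi> where "\<forall>x y. (x,y)\<in>E \<longrightarrow> balance_seq E \<alpha> vs x y = \<alpha> x y + \<phi> y - \<phi> x" by blast
  from pot[OF this, of v] show ?case by (simp add: balance_seq_def)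
qed

lemma max_step:
  assumes sc: "strongly_connected V E" and v: "v \<in> V"
    and le: "\<forall>(x,y)\<in>E. \<beta> x y \<le> M"
  shows "\<forall>(x,y)\<in>E. balance E \<beta> v x y \<le> M"
proof -
  have fin: "finite E" using sc unfolding strongly_connected_def
    by (meson finite_SigmaI finite_subset)
  have "(v,v) \<in> E\<^sup>+" using sc v unfolding strongly_connected_def by blast
  then obtain u where u: "(u,v)\<in>E" by (meson tranclD2)
  from \<open>(v,v) \<in> E\<^sup>+\<close> obtain w where w: "(v,w)\<in>E" by (meson tranclD)
  let ?I = "{\<beta> u v | u. (u, v) \<in> E}"
  let ?O = "{\<beta> v w | w. (v, w) \<in> E}"
  have fI: "finite ?I"
  proof -
    have "?I = (\<lambda>p. \<beta> (fst p) (snd p)) ` (E \<inter> {p. snd p = v})" by force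
    thus ?thesis using fin by simp
  qed
  have fO: "finite ?O"
  proof -
    have "?O = (\<lambda>p. \<beta> (fst p) (snd p)) ` (E \<inter> {p. fst p = v})" by force
    thus ?thesis using fin by simp
  qed
  have neI: "?I \<noteq> {}" using u by blast
  have neO: "?O \<noteq> {}" using w by blast
  define i where "i = alpha_in E \<beta> v"
  define ou where "ou = alpha_out E \<beta> v"
  have iM: "i \<le> M" unfolding i_def alpha_in_def using fI neI le by (subst Max_le_iff) auto
  have oM: "ou \<le> M" unfolding ou_def alpha_out_def using fO neO le by (subst Max_le_iff) auto
  have ini: "\<beta> x v \<le> i" if "(x,v)\<in>E" for x
    unfolding i_def alpha_in_def using fI that by (intro Max_ge) auto
  have outo: "\<beta> v y \<le> ou" if "(v,y)\<in>E" for y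
    unfolding ou_def alpha_out_def using fO that by (intro Max_ge) auto
  show ?thesis
  proof (clarify)
    fix x y assume xy: "(x,y)\<in>E"
    show "balance E \<beta> v x y \<le> M"
    proof -
      have "balance E \<beta> v x y = (if y = v \<and> x \<noteq> v then \<beta> x y + (ou - i)/2
            else if x = v \<and> y \<noteq> v then \<beta> x y - (ou - i)/2 else \<beta> x y)"
        using xy unfolding balance_def Let_def i_def ou_def by auto
      moreover have "\<beta> x y \<le> M" using le xy by blast
      moreover have "y = v \<and> x \<noteq> v \<Longrightarrow> \<beta> x y + (ou - i)/2 \<le> M"
      proof -
        assume "y = v \<and> x \<noteq> v"
        then have "\<beta> x y \<le> i" using ini[of x] xy by auto
        then show ?thesis using iM oM by (simp add: field_simps)
      qed
      moreover have "x = v \<and> y \<noteq> v \<Longrightarrow> \<beta> x y - (ou - i)/2 \<le> M"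
      proof -
        assume "x = v \<and> y \<noteq> v"
        then have "\<beta> x y \<le> ou" using outo[of y] xy by auto
        then show ?thesis using iM oM by (simp add: field_simps)
      qed
      ultimately show ?thesis by presburger
    qed
  qed
qed

lemma max_seq:
  assumes sc: "strongly_connected V E"
    and le: "\<forall>(x,y)\<in>E. \<alpha> x y \<le> M"
  shows "set vs \<subseteq> V \<Longrightarrow> \<forall>(x,y)\<in>E. balance_seq E \<alpha> vs x y \<le> M"
proof (induction vs rule: rev_induct)
  case Nil
  then show ?case using le by (simp add: balance_seq_def)
next
  case (snoc v vs)
  then have "\<forall>(x,y)\<in>E. balance_seq E \<alpha> vs x y \<le> M" by simp
  from max_step[OF sc _ this, of v] snoc.prems show ?case by (simp add: balance_seq_def)
qed

lemma path_bound:
  assumes "(a,b) \<in> E\<^sup>+"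
  shows "\<exists>c. \<forall>\<phi>::'v\<Rightarrow>real. (\<forall>(x,y)\<in>E. \<alpha> x y + \<phi> y - \<phi> x \<le> M) \<longrightarrow> \<phi> b - \<phi> a \<le> c"
  using assms
proof (induction rule: trancl_induct)
  case (base y)
  show ?case by (rule exI[of _ "M - \<alpha> a y"]) (use base in fastforce)
next
  case (step y z)
  then obtain c where c: "\<forall>\<phi>::'v\<Rightarrow>real. (\<forall>(x,y)\<in>E. \<alpha> x y + \<phi> y - \<phi> x \<le> M) \<longrightarrow> \<phi> y - \<phi> a \<le> c" by blast
  show ?case
  proof (rule exI[of _ "c + (M - \<alpha> y z)"], intro allI impI)
    fix \<phi> :: "'v\<Rightarrow>real" assume h: "\<forall>(x,y)\<in>E. \<alpha> x y + \<phi> y - \<phi> x \<le> M"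
    have "\<phi> y - \<phi> a \<le> c" using c h by blast
    moreover have "\<alpha> y z + \<phi> z - \<phi> y \<le> M" using h step(2) by blast
    ultimately show "\<phi> z - \<phi> a \<le> c + (M - \<alpha> y z)" by linarith
  qed
qed

lemma uniform:
  assumes "finite A" "\<forall>e\<in>A. \<exists>c. \<forall>vs. P vs \<longrightarrow> c \<le> f vs e"
  shows "\<exists>b::real. \<forall>vs. P vs \<longrightarrow> (\<forall>e\<in>A. b \<le> f vs e)"
  using assms
proof (induction A rule: finite_induct)
  case empty
  then show ?case by auto
next
  case (insert a A)
  then obtain b where b: "\<forall>vs. P vs \<longrightarrow> (\<forall>e\<in>A. b \<le> f vs e)" by auto
  from insert obtain c where c: "\<forall>vs. P vs \<longrightarrow> c \<le> f vs a" by auto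
  show ?case by (rule exI[of _ "min b c"]) (use b c in fastforce)
qed

theorem lemma9:
  fixes V :: "'v set" and E :: "('v \<times> 'v) set" and \<alpha> :: "'v \<Rightarrow> 'v \<Rightarrow> real"
  assumes "strongly_connected V E"
  shows "\<exists>b::real. \<forall>vs. set vs \<subseteq> V \<longrightarrow>
           (\<forall>(x, y)\<in>E. b \<le> balance_seq E \<alpha> vs x y)"
proof -
  have fin: "finite E" using assms unfolding strongly_connected_def
    by (meson finite_SigmaI finite_subset)
  define M where "M = Max ((\<lambda>p. \<alpha> (fst p) (snd p)) ` E)"
  have le: "\<forall>(x,y)\<in>E. \<alpha> x y \<le> M"
    unfolding M_def using fin by (auto intro!: Max_ge simp: image_iff) (metis fst_conv snd_conv)
  have each: "\<forall>e\<in>E. \<exists>c. \<forall>vs. set vs \<subseteq> V \<longrightarrow> c \<le> balance_seq E \<alpha> vs (fst e) (snd e)"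
  proof
    fix e assume e: "e \<in> E"
    obtain x y where xy: "e = (x,y)" by fastforce
    have "(y,x) \<in> E\<^sup>+" using assms e xy unfolding strongly_connected_def by blast
    from path_bound[OF this, of \<alpha> M] obtain c where
      c: "\<forall>\<phi>::'v\<Rightarrow>real. (\<forall>(x,y)\<in>E. \<alpha> x y + \<phi> y - \<phi> x \<le> M) \<longrightarrow> \<phi> x - \<phi> y \<le> c" by blast
    show "\<exists>c. \<forall>vs. set vs \<subseteq> V \<longrightarrow> c \<le> balance_seq E \<alpha> vs (fst e) (snd e)"
    proof (rule exI[of _ "\<alpha> x y - c"], intro allI impI)
      fix vs :: "'v list" assume vs: "set vs \<subseteq> V"
      obtain \<phi> where \<phi>: "\<forall>x y. (x,y)\<in>E \<longrightarrow> balance_seq E \<alpha> vs x y = \<alpha> x y + \<phi> y - \<phi> x"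
        using pot_seq by blast
      have "\<forall>(x,y)\<in>E. balance_seq E \<alpha> vs x y \<le> M" using max_seq[OF assms le vs] .
      hence "\<forall>(x,y)\<in>E. \<alpha> x y + \<phi> y - \<phi> x \<le> M" using \<phi> by auto
      hence "\<phi> x - \<phi> y \<le> c" using c by blast
      moreover have "balance_seq E \<alpha> vs x y = \<alpha> x y + \<phi> y - \<phi> x" using \<phi> e xy by blast
      ultimately show "\<alpha> x y - c \<le> balance_seq E \<alpha> vs (fst e) (snd e)" using xy by simp
    qed
  qed
  from uniform[OF fin each] obtain b where
    b: "\<forall>vs. set vs \<subseteq> V \<longrightarrow> (\<forall>e\<in>E. b \<le> balance_seq E \<alpha> vs (fst e) (snd e))" by blast
  show ?thesis by (rule exI[of _ b]) (use b in fastforce)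
qed

end
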